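(* Let $a,b,\sigma$ be real numbers with $\sigma>0$, $0<b<1$, $b-1\le a<b$, and $\sigma<1-a+b$. Then every real solution of $$x_{n+1}=ax_n+b(b-a)x_{n-1}+\sigma\tanh(x_n-bx_{n-1}),\quad n\ge0,$$ converges to $0$.
   Context: Solutions are generated by iteration from arbitrary real initial values $x_0,x_{-1}$. *)

theory Defs
  imports "HOL-Analysis.Analysis"
begin

end

theory Submission
  imports Defs
begin

lemma tanh_lower:
  fixes y M :: real
  assumes "0 \<le> y" "y \<le> M"
  shows "(1 - tanh M ^ 2) * y \<le> tanh y"
proof -
  define k where "k = 1 - tanh M ^ 2"
  have "(\<lambda>t. tanh t - k * t) 0 \<le> (\<lambda>t. tanh t - k * t) y"
  proof (rule deriv_nonneg_imp_mono[where g = "\<lambda>t. tanh t - k * t" and g' = "\<lambda>t. 1 - tanh t ^ 2 - k"])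
    fix t :: real assume "t \<in> {0..y}"
    show "((\<lambda>t. tanh t - k * t) has_real_derivative 1 - tanh t ^ 2 - k) (at t)"
      by (auto intro!: derivative_eq_intros simp: cosh_real_pos[THEN less_imp_neq, symmetric])
  next
    fix t :: real assume t: "t \<in> {0..y}"
    have "0 \<le> tanh t" "tanh t \<le> tanh M" using t assms by auto
    then have "tanh t ^ 2 \<le> tanh M ^ 2" by (simp add: power_mono)
    then show "0 \<le> 1 - tanh t ^ 2 - k" by (simp add: k_def)
  qed (use assms in auto)
  then show ?thesis by (simp add: k_def)
qed

lemma contr:
  fixes c \<sigma> M y :: real
  assumes "\<sigma> > 0" "-1 \<le> c" "c + \<sigma> < 1" "\<bar>y\<bar> \<le> M"
  shows "\<bar>c * y + \<sigma> * tanh y\<bar> \<le> max (c + \<sigma>) (- (c + \<sigma> * (1 - tanh M ^ 2))) * \<bar>y\<bar>"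
proof -
  define k where "k = 1 - tanh M ^ 2"
  define \<rho> where "\<rho> = max (c + \<sigma>) (- (c + \<sigma> * k))"
  have gen: "\<bar>c * z + \<sigma> * tanh z\<bar> \<le> \<rho> * z" if z: "0 \<le> z" "z \<le> M" for z
  proof -
    have l: "k * z \<le> tanh z" using tanh_lower[OF z] by (simp add: k_def)
    have u: "tanh z \<le> z"
    proof -
      have "(\<lambda>t. t - tanh t) 0 \<le> (\<lambda>t. t - tanh t) z"
      proof (rule deriv_nonneg_imp_mono[where g = "\<lambda>t. t - tanh t" and g' = "\<lambda>t. tanh t ^ 2"])
        fix t :: real assume "t \<in> {0..z}"
        show "((\<lambda>t. t - tanh t) has_real_derivative tanh t ^ 2) (at t)"
          by (auto intro!: derivative_eq_intros simp: cosh_real_pos[THEN less_imp_neq, symmetric])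
      qed (use z in auto)
      then show ?thesis by simp
    qed
    have "c * z + \<sigma> * tanh z \<le> (c + \<sigma>) * z" using u \<open>\<sigma>>0\<close>
      by (simp add: algebra_simps)
    moreover have "(c + \<sigma> * k) * z \<le> c * z + \<sigma> * tanh z" using l \<open>\<sigma>>0\<close>
      by (simp add: algebra_simps)
    ultimately show ?thesis unfolding \<rho>_def using z
      by (smt (verit) mult_right_mono max.cobounded1 max.cobounded2 mult_minus_left)
  qed
  show ?thesis
  proof (cases "y \<ge> 0")
    case True then show ?thesis using gen[of y] assms(4) by (simp add: \<rho>_def k_def)
  next
    case False
    have "\<bar>c * (-y) + \<sigma> * tanh (-y)\<bar> \<le> \<rho> * (-y)" using gen[of "-y"] False assms(4) by simp
    then show ?thesis using False by (simp add: \<rho>_def k_def abs_minus_commute algebra_simps)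
  qed
qed

theorem mainTheorem10:
  fixes a b \<sigma> :: real and x :: "nat \<Rightarrow> real"
  assumes "\<sigma> > 0" and "0 < b" and "b < 1" and "b - 1 \<le> a" and "a < b"
    and "\<sigma> < 1 - a + b"
    and rec: "\<And>n. x (n + 2) = a * x (n + 1) + b * (b - a) * x n + \<sigma> * tanh (x (n + 1) - b * x n)"
  shows "x \<longlonglongrightarrow> 0"
proof -
  define c where "c = a - b"
  define y where "y n = x (n + 1) - b * x n" for n
  have yrec: "y (Suc n) = c * y n + \<sigma> * tanh (y n)" for n
    using rec[of n] unfolding y_def c_def by (simp add: algebra_simps numeral_2_eq_2)
  define M where "M = \<bar>y 0\<bar>"
  define \<rho> where "\<rho> = max (c + \<sigma>) (- (c + \<sigma> * (1 - tanh M ^ 2)))"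
  have c1: "-1 \<le> c" "c + \<sigma> < 1" using assms by (auto simp: c_def)
  have tM: "tanh M ^ 2 < 1"
  proof -
    have "\<bar>tanh M\<bar> < 1" using tanh_real_lt_1[of M] tanh_real_gt_neg1[of M] by auto
    then show ?thesis by (simp add: power2_less_1_iff tanh_real_gt_neg1 tanh_real_lt_1)
  qed
  have rho0: "0 \<le> \<rho>" "\<rho> < 1"
  proof -
    have "0 \<le> \<sigma> * tanh M ^ 2" using assms by simp
    then show "0 \<le> \<rho>" unfolding \<rho>_def by (simp add: algebra_simps)
    have "0 < \<sigma> * (1 - tanh M ^ 2)" using assms tM by simp
    then show "\<rho> < 1" unfolding \<rho>_def using c1 by simp
  qed
  have ybound: "\<bar>y n\<bar> \<le> M * \<rho> ^ n" for n
  proof (induction n)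
    case 0 then show ?case by (simp add: M_def)
  next
    case (Suc n)
    have "\<rho> ^ n \<le> 1" using rho0 by (simp add: power_le_one)
    then have "M * \<rho> ^ n \<le> M" using M_def by (simp add: mult_left_le)
    then have "\<bar>y n\<bar> \<le> M" using Suc by simp
    from contr[OF assms(1) c1 this] have "\<bar>y (Suc n)\<bar> \<le> \<rho> * \<bar>y n\<bar>" by (simp add: yrec \<rho>_def)
    also have "\<dots> \<le> \<rho> * (M * \<rho> ^ n)" using Suc rho0 by (simp add: mult_left_mono)
    finally show ?case by (simp add: algebra_simps)
  qed
  define r where "r = (1 + max \<rho> b) / 2"
  have r: "\<rho> \<le> r" "b < r" "r < 1" "0 \<le> r" using rho0 assms by (auto simp: r_def)
  define C where "C = max \<bar>x 0\<bar> (M / (r - b))"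
  have MC: "M \<le> C * (r - b)"
  proof -
    have "M / (r - b) \<le> C" by (simp add: C_def)
    then show ?thesis using r by (simp add: pos_divide_le_eq)
  qed
  have M0: "0 \<le> M" by (simp add: M_def)
  have xb: "\<bar>x n\<bar> \<le> C * r ^ n" for n
  proof (induction n)
    case 0 then show ?case by (simp add: C_def)
  next
    case (Suc n)
    have xs: "x (Suc n) = b * x n + y n" by (simp add: y_def)
    have "\<bar>x (Suc n)\<bar> \<le> b * \<bar>x n\<bar> + \<bar>y n\<bar>" using xs assms(2) abs_triangle_ineq[of "b * x n" "y n"]
      by (simp add: abs_mult)
    also have "\<dots> \<le> b * (C * r ^ n) + M * r ^ n"
    proof -
      have "\<rho> ^ n \<le> r ^ n" using rho0 r by (simp add: power_mono)
      then have "M * \<rho> ^ n \<le> M * r ^ n" using M0 by (simp add: mult_left_mono)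
      then show ?thesis using ybound[of n] mult_left_mono[OF Suc.IH less_imp_le[OF assms(2)]] by linarith
    qed
    also have "\<dots> \<le> b * (C * r ^ n) + C * (r - b) * r ^ n"
      using MC r by (simp add: mult_right_mono)
    also have "\<dots> = C * r ^ Suc n" by (simp add: algebra_simps)
    finally show ?case .
  qed
  have "(\<lambda>n. C * r ^ n) \<longlonglongrightarrow> 0"
    using r by (auto intro!: tendsto_mult_right_zero LIMSEQ_power_zero)
  moreover have "\<forall>\<^sub>F n in sequentially. norm (x n) \<le> C * r ^ n" using xb by simp
  ultimately show ?thesis using Lim_null_comparison[where g="\<lambda>n. C * r ^ n"] by blast
qed

end
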